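(* Let $x,y\ge 0$, not both zero, and $z>0$ (the approximation is intended for the regime $x,y\ll z$). Let $a=(x+y)/2$ and $g=\sqrt{xy}$. Then $$R_D(x,y,z)=\frac{3}{2z^{3/2}}\left(\ln\frac{8z}{a+g}-2+\frac{\theta}{z}\ln\frac{2z}{a+g}\right),$$ where $\frac{g}{1-g/z}<\theta<\frac{3a}{2(1-a/z)}$.
   Context: For $x,y\ge0$ not both zero and $z>0$: $R_D(x,y,z)=\frac32\int_0^\infty[(t+x)(t+y)]^{-1/2}(t+z)^{-3/2}\,dt$. *)

theory Defs
  imports "HOL-Analysis.Analysis"
begin

definition carlson_RD :: "real \<Rightarrow> real \<Rightarrow> real \<Rightarrow> real" where
  "carlson_RD x y z =
     3 / 2 * integral {0..} (\<lambda>t. 1 / sqrt ((t + x) * (t + y)) * (t + z) powr (-3/2))"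

end

theory Submission imports Defs "HOL-Real_Asymp.Real_Asymp" begin



lemma unimodal_pos:
  fixes f d :: "real \<Rightarrow> real"
  assumes cont: "\<And>k. 0 \<le> k \<Longrightarrow> k < 1 \<Longrightarrow> isCont f k"
    and f0: "f 0 = 0" and lim1: "(f \<longlongrightarrow> 0) (at_left 1)"
    and der: "\<And>k. 0 < k \<Longrightarrow> k < 1 \<Longrightarrow> (f has_real_derivative d k) (at k)"
    and sgn: "\<And>k1 k2. 0 < k1 \<Longrightarrow> k1 < k2 \<Longrightarrow> k2 < 1 \<Longrightarrow> d k1 \<le> 0 \<Longrightarrow> d k2 < 0"
    and k: "0 < k" "k < 1"
  shows "f k > 0"
proof (cases "d k \<ge> 0")
  case True
  have "f 0 < f k"
  proof (rule DERIV_pos_imp_increasing_open[OF k(1)])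
    fix t assume t: "0 < t" "t < k"
    have "d t > 0"
    proof (rule ccontr)
      assume "\<not> d t > 0"
      then have "d k < 0" using sgn[of t k] t k by auto
      with True show False by simp
    qed
    then show "\<exists>y. DERIV f t :> y \<and> 0 < y" using der[of t] t k by auto
  next
    show "continuous_on {0..k} f"
      by (intro continuous_at_imp_continuous_on ballI cont) (use k in auto)
  qed
  then show ?thesis using f0 by simp
next
  case False
  define k' where "k' = (k + 1) / 2"
  have k': "k < k'" "k' < 1" using k by (auto simp: k'_def)
  have dec: "f t < f s" if "k \<le> s" "s < t" "t < 1" for s t
  proof (rule DERIV_neg_imp_decreasing_open[OF that(2)])
    fix u assume u: "s < u" "u < t"
    have "d u < 0" using sgn[of k u] False u that k by auto
    then show "\<exists>y. DERIV f u :> y \<and> y < 0" using der[of u] u that k by auto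
  next
    show "continuous_on {s..t} f"
      by (intro continuous_at_imp_continuous_on ballI cont) (use k that in auto)
  qed
  have "f k' \<ge> 0"
  proof (rule tendsto_upperbound[OF lim1])
    show "\<forall>\<^sub>F t in at_left 1. f t \<le> f k'"
      by (rule eventually_at_leftI[OF _ k'(2)]) (use dec[of k'] k' in \<open>auto intro: less_imp_le\<close>)
  qed simp
  moreover have "f k' < f k" using dec[of k k'] k' by simp
  ultimately show ?thesis by simp
qed

lemma sgn_from_unimodal:
  fixes w w' :: "real \<Rightarrow> real" and mz :: real
  assumes mz: "0 < mz" "mz < 1"
    and cont: "\<And>m. 0 \<le> m \<Longrightarrow> m < 1 \<Longrightarrow> isCont w m" and w0: "w 0 = 0"
    and der: "\<And>m. 0 < m \<Longrightarrow> m < 1 \<Longrightarrow> (w has_real_derivative w' m) (at m)"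
    and pos: "\<And>m. 0 < m \<Longrightarrow> m < mz \<Longrightarrow> w' m > 0"
    and neg: "\<And>m. mz < m \<Longrightarrow> m < 1 \<Longrightarrow> w' m < 0"
    and m: "0 < p" "p < q" "q < 1" "w p \<le> 0"
  shows "w q < 0"
proof (cases "p \<le> mz")
  case True
  have "w 0 < w p"
  proof (rule DERIV_pos_imp_increasing_open[OF m(1)])
    fix t assume t: "0 < t" "t < p"
    then show "\<exists>y. DERIV w t :> y \<and> 0 < y" using der[of t] pos[of t] True m by auto
  next
    show "continuous_on {0..p} w"
      by (intro continuous_at_imp_continuous_on ballI cont) (use m in auto)
  qed
  with w0 m show ?thesis by simp
next
  case False
  have "w q < w p"
  proof (rule DERIV_neg_imp_decreasing_open[OF m(2)])
    fix t assume t: "p < t" "t < q"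
    then show "\<exists>y. DERIV w t :> y \<and> y < 0" using der[of t] neg[of t] False m by auto
  next
    show "continuous_on {p..q} w"
      by (intro continuous_at_imp_continuous_on ballI cont) (use m in auto)
  qed
  with m show ?thesis by simp
qed

definition phiA :: "real \<Rightarrow> real" where
  "phiA k = (1+k)*ln(1+k) - (1-k)*ln(1-k) - 2*k - (2*ln 2 - 2)*k^3"

definition psiA :: "real \<Rightarrow> real" where
  "psiA m = ln (1-m) + (6 - 6*ln 2)*m"

lemma phiA_pos:
  assumes "0 < k" "k < 1" shows "phiA k > 0"
proof (rule unimodal_pos[where f = phiA and d = "\<lambda>k. psiA (k^2)"])
  show "isCont phiA k" if "0 \<le> k" "k < 1" for k
    unfolding phiA_def using that by (intro continuous_intros) auto
  show "phiA 0 = 0" by (simp add: phiA_def)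
  show "(phiA \<longlongrightarrow> 0) (at_left 1)"
    unfolding phiA_def by real_asymp
  show "(phiA has_real_derivative psiA (k^2)) (at k)" if "0 < k" "k < 1" for k
  proof -
    have "(phiA has_real_derivative (ln(1+k) + 1) + (ln(1-k) + 1) - 2 - (2*ln 2 - 2)*(3*k^2)) (at k)"
      unfolding phiA_def using that
      by (auto intro!: derivative_eq_intros)
    moreover have "ln (1-k^2) = ln(1+k) + ln(1-k)"
    proof -
      have "1 - k^2 = (1+k)*(1-k)" by (simp add: power2_eq_square algebra_simps)
      then show ?thesis using that by (simp add: ln_mult)
    qed
    ultimately show ?thesis unfolding psiA_def by (simp add: algebra_simps)
  qed
  show "psiA (k2^2) < 0" if "0 < k1" "k1 < k2" "k2 < 1" "psiA (k1^2) \<le> 0" for k1 k2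
  proof (rule sgn_from_unimodal[where w = psiA and w' = "\<lambda>m. (6 - 6*ln 2) - 1/(1-m)"
        and mz = "1 - 1/(6 - 6*ln 2)" and p = "k1^2"])
    have l2: "ln (2::real) \<le> 25/36" by (rule ln2_le_25_over_36)
    show "0 < 1 - 1/(6 - 6*ln 2::real)" "1 - 1/(6 - 6*ln 2) < (1::real)"
      using l2 by (auto simp: field_simps)
    show "isCont psiA m" if "0 \<le> m" "m < 1" for m
      unfolding psiA_def using that by (intro continuous_intros) auto
    show "psiA 0 = 0" by (simp add: psiA_def)
    show "(psiA has_real_derivative (6 - 6*ln 2) - 1/(1-m)) (at m)" if "0 < m" "m < 1" for m
      unfolding psiA_def using that
      by (auto intro!: derivative_eq_intros simp: field_simps)
    have al: "(6 - 6*ln 2::real) > 1" using l2 by simp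
    show "(6 - 6*ln 2) - 1/(1-m) > 0" if "0 < m" "m < 1 - 1/(6 - 6*ln 2)" for m :: real
    proof -
      have "1/(6 - 6*ln 2) < 1 - m" using that by simp
      moreover have "0 < 1/(6 - 6*ln 2::real)" using al by simp
      ultimately have m1: "0 < 1 - m" by linarith
      have "1 < (6 - 6*ln 2) * (1 - m)" using al \<open>1/(6 - 6*ln 2) < 1 - m\<close> by (simp add: field_simps)
      then have "1/(1-m) < 6 - 6*ln 2" using m1 al by (simp add: field_simps)
      then show ?thesis by simp
    qed
    show "(6 - 6*ln 2) - 1/(1-m) < 0" if "1 - 1/(6 - 6*ln 2) < m" "m < 1" for m :: real
    proof -
      have "1 - m < 1/(6 - 6*ln 2)" using that by simp
      then have "(6 - 6*ln 2) * (1 - m) < 1" using al by (simp add: field_simps)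
      have m1: "0 < 1 - m" using that by simp
      then have "6 - 6*ln 2 < 1/(1-m)" using m1 al \<open>(6 - 6*ln 2) * (1 - m) < 1\<close> by (simp add: field_simps)
      then show ?thesis by simp
    qed
    show "0 < k1^2" "k1^2 < k2^2" "k2^2 < 1" "psiA (k1^2) \<le> 0"
      using that by (auto intro: power_strict_mono simp: power_less_one_iff)
  qed
qed (use assms in auto)

definition chiB :: "real \<Rightarrow> real" where
  "chiB k = (2*ln 2 - 2)*k^3 + 2*k - (1+k)^2*(2-k)/2 * ln(1+k) + (1-k)^2*(2+k)/2 * ln(1-k)"

definition omegaB :: "real \<Rightarrow> real" where
  "omegaB m = -(5 - 6*ln 2)*m - 3/2*(1-m)*ln(1-m)"

lemma chiB_pos:
  assumes "0 < k" "k < 1" shows "chiB k > 0"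
proof (rule unimodal_pos[where f = chiB and d = "\<lambda>k. omegaB (k^2)"])
  show "isCont chiB k" if "0 \<le> k" "k < 1" for k
    unfolding chiB_def using that by (intro continuous_intros) auto
  show "chiB 0 = 0" by (simp add: chiB_def)
  show "(chiB \<longlongrightarrow> 0) (at_left 1)"
    unfolding chiB_def by real_asymp
  show "(chiB has_real_derivative omegaB (k^2)) (at k)" if "0 < k" "k < 1" for k
  proof -
    have "ln (1-k^2) = ln(1+k) + ln(1-k)"
    proof -
      have "1 - k^2 = (1+k)*(1-k)" by (simp add: power2_eq_square algebra_simps)
      then show ?thesis using that by (simp add: ln_mult)
    qed
    then have e: "omegaB (k^2) = -(5 - 6*ln 2)*k^2 - 3/2*(1-k^2)*(ln(1+k) + ln(1-k))"
      unfolding omegaB_def by simp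
    have d1: "((\<lambda>k. (1+k)^2*(2-k)/2 * ln(1+k)) has_real_derivative
        (3*(1-k^2)/2*ln(1+k) + (1+k)*(2-k)/2)) (at k)"
    proof -
      have q: "(1+k)^2*(2-k)*2/(1+k) = (1+k)*(2-k)*2" using that by (simp add: power2_eq_square)
      show ?thesis using that by (auto intro!: derivative_eq_intros simp: q) (simp add: algebra_simps power2_eq_square)
    qed
    have d2: "((\<lambda>k. (1-k)^2*(2+k)/2 * ln(1-k)) has_real_derivative
        (-3*(1-k^2)/2*ln(1-k) - (1-k)*(2+k)/2)) (at k)"
    proof -
      have q: "(1-k)^2*(2+k)*2/(1-k) = (1-k)*(2+k)*2" using that by (simp add: power2_eq_square)
      show ?thesis using that by (auto intro!: derivative_eq_intros simp: q) (simp add: algebra_simps power2_eq_square)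
    qed
    have d3: "((\<lambda>k. (2*ln 2 - 2)*k^3 + 2*k) has_real_derivative ((2*ln 2 - 2)*(3*k^2) + 2)) (at k)"
      by (auto intro!: derivative_eq_intros)
    have "(chiB has_real_derivative ((2*ln 2 - 2)*(3*k^2) + 2) - (3*(1-k^2)/2*ln(1+k) + (1+k)*(2-k)/2)
        + (-3*(1-k^2)/2*ln(1-k) - (1-k)*(2+k)/2)) (at k)"
      unfolding chiB_def by (intro DERIV_add DERIV_diff d1 d2 d3)
    moreover have "((2*ln 2 - 2)*(3*k^2) + 2) - (3*(1-k^2)/2*ln(1+k) + (1+k)*(2-k)/2)
        + (-3*(1-k^2)/2*ln(1-k) - (1-k)*(2+k)/2) = -(5 - 6*ln 2)*k^2 - 3/2*(1-k^2)*(ln(1+k) + ln(1-k))"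
      by (simp add: field_simps power2_eq_square)
    ultimately have "(chiB has_real_derivative -(5 - 6*ln 2)*k^2 - 3/2*(1-k^2)*(ln(1+k) + ln(1-k))) (at k)"
      by simp
    then show ?thesis using e by simp
  qed
  show "omegaB (k2^2) < 0" if "0 < k1" "k1 < k2" "k2 < 1" "omegaB (k1^2) \<le> 0" for k1 k2
  proof (rule sgn_from_unimodal[where w = omegaB and w' = "\<lambda>m. 6*ln 2 - 7/2 + 3/2*ln(1-m)"
        and mz = "1 - exp (7/3 - 4*ln 2)" and p = "k1^2"])
    have l2: "2/3 \<le> ln (2::real)" by (rule ln2_ge_two_thirds)
    have c0: "7/3 - 4*ln 2 < (0::real)" using l2 by simp
    show "0 < 1 - exp (7/3 - 4*ln 2::real)" "1 - exp (7/3 - 4*ln 2) < (1::real)"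
      using c0 by auto
    show "isCont omegaB m" if "0 \<le> m" "m < 1" for m
      unfolding omegaB_def using that by (intro continuous_intros) auto
    show "omegaB 0 = 0" by (simp add: omegaB_def)
    show "(omegaB has_real_derivative 6*ln 2 - 7/2 + 3/2*ln(1-m)) (at m)" if "0 < m" "m < 1" for m
    proof -
      have q: "(1-m) * (1/(1-m)) = 1" using that by simp
      have "((\<lambda>m. (1-m)*ln(1-m)) has_real_derivative (-ln(1-m) - 1)) (at m)"
        using that by (auto intro!: derivative_eq_intros simp: q)
      then have "((\<lambda>m. -(5 - 6*ln 2)*m - 3/2*((1-m)*ln(1-m))) has_real_derivative (-(5 - 6*ln 2))*1 - 3/2*(-ln(1-m) - 1)) (at m)"
        by (intro DERIV_diff DERIV_cmult DERIV_ident)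
      moreover have "omegaB = (\<lambda>m. -(5 - 6*ln 2)*m - 3/2*((1-m)*ln(1-m)))"
        by (auto simp: omegaB_def fun_eq_iff)
      ultimately have "(omegaB has_real_derivative (-(5 - 6*ln 2))*1 - 3/2*(-ln(1-m) - 1)) (at m)" by simp
      moreover have "(-(5 - 6*ln 2))*1 - 3/2*(-ln(1-m) - 1) = 6*ln 2 - 7/2 + 3/2*ln(1-m)" by (simp add: field_simps)
      ultimately show ?thesis by (simp only:)
    qed
    show "6*ln 2 - 7/2 + 3/2*ln(1-m) > 0" if "0 < m" "m < 1 - exp (7/3 - 4*ln 2)" for m :: real
    proof -
      have "exp (7/3 - 4*ln 2) < 1 - m" using that by simp
      then have "ln (exp (7/3 - 4*ln 2)) < ln (1-m)"
        using exp_gt_zero[of "7/3 - 4*ln 2"] by (subst ln_less_cancel_iff) linarith+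
      then have "7/3 - 4*ln 2 < ln (1-m)" by simp
      then show ?thesis by simp
    qed
    show "6*ln 2 - 7/2 + 3/2*ln(1-m) < 0" if "1 - exp (7/3 - 4*ln 2) < m" "m < 1" for m :: real
    proof -
      have "1 - m < exp (7/3 - 4*ln 2)" using that by simp
      then have "ln (1-m) < ln (exp (7/3 - 4*ln 2))"
        by (subst ln_less_cancel_iff) (use that in auto)
      then have "ln (1-m) < 7/3 - 4*ln 2" by simp
      then show ?thesis by simp
    qed
    show "0 < k1^2" "k1^2 < k2^2" "k2^2 < 1" "omegaB (k1^2) \<le> 0"
      using that by (auto intro: power_strict_mono simp: power_less_one_iff)
  qed
qed (use assms in auto)



lemma ftc_Ioi:
  fixes P p :: "real \<Rightarrow> real"
  assumes der: "\<And>t. 0 < t \<Longrightarrow> (P has_real_derivative p t) (at t)"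
    and cont: "\<And>t. 0 < t \<Longrightarrow> isCont p t"
    and nn: "\<And>t. 0 < t \<Longrightarrow> 0 \<le> p t"
    and A: "(P \<longlongrightarrow> A) (at_right 0)" and B: "(P \<longlongrightarrow> B) at_top"
  shows "(p has_integral (B - A)) {0<..}"
proof -
  have hyp: "ereal 0 < \<infinity>" by simp
  have A': "((P \<circ> real_of_ereal) \<longlongrightarrow> A) (at_right (ereal 0))"
    using A by (simp add: ereal_tendsto_simps1)
  have B': "((P \<circ> real_of_ereal) \<longlongrightarrow> B) (at_left \<infinity>)"
    using B by (simp add: ereal_tendsto_simps1)
  have I: "set_integrable lborel (einterval (ereal 0) \<infinity>) p"
      "(LBINT x=ereal 0..\<infinity>. p x) = B - A"
    by (rule interval_integral_FTC_nonneg[OF hyp _ _ _ A' B'];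
        (use der cont nn in auto))+
  have I1: "set_integrable lborel {0<..} p" using I(1) by simp
  have "(LBINT x=ereal 0..\<infinity>. p x) = (LINT x : {0<..} | lborel. p x)"
    by (simp add: interval_lebesgue_integral_def)
  then have I2: "(LINT x : {0<..} | lborel. p x) = B - A" using I(2) by simp
  have "p integrable_on {0<..}" "(LINT x : {0<..} | lborel. p x) = integral {0<..} p"
    using set_borel_integral_eq_integral[OF I1] by auto
  then show ?thesis using I2 by (metis integrable_integral)
qed

definition Hf :: "real \<Rightarrow> real \<Rightarrow> real" where
  "Hf k w = ((ln (w-k) - ln (w+k))/k + 2/w)/k^2"

lemma Hf_lim:
  assumes k: "0 < k"
  shows "((\<lambda>w. Hf k w) \<longlongrightarrow> 0) at_top"
proof -
  have lim0: "((\<lambda>w. k / w) \<longlongrightarrow> 0) at_top" by real_asymp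
  have lim2: "((\<lambda>w::real. 2 / w) \<longlongrightarrow> 0) at_top" by real_asymp
  have "((\<lambda>w. ((ln (1 - k/w) - ln (1 + k/w))/k + 2/w)/k^2) \<longlongrightarrow>
        ((ln (1 - 0) - ln (1 + 0))/k + 0)/k^2) at_top"
    using k by (intro tendsto_intros lim0 lim2) auto
  then have L: "((\<lambda>w. ((ln (1 - k/w) - ln (1 + k/w))/k + 2/w)/k^2) \<longlongrightarrow> 0) at_top"
    by simp
  have ev: "\<forall>\<^sub>F w in at_top. ((ln (1 - k/w) - ln (1 + k/w))/k + 2/w)/k^2 = Hf k w"
  proof (rule eventually_mono[OF eventually_gt_at_top[of k]])
    fix w assume w: "k < w"
    have "1 - k/w = (w-k)/w" "1 + k/w = (w+k)/w" using w k by (auto simp: field_simps)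
    moreover have "ln ((w-k)/w) = ln (w-k) - ln w" "ln ((w+k)/w) = ln (w+k) - ln w"
      using w k by (auto simp: ln_div)
    ultimately show "((ln (1 - k/w) - ln (1 + k/w))/k + 2/w)/k^2 = Hf k w"
      unfolding Hf_def by simp
  qed
  show ?thesis using Lim_transform_eventually[OF L ev] .
qed

lemma Hf_deriv:
  assumes "0 < k" "k < w"
  shows "(Hf k has_real_derivative 2/((w^2-k^2)*w^2)) (at w)"
proof -
  have "(Hf k has_real_derivative ((1/(w-k) - 1/(w+k))/k - 2/w^2)/k^2) (at w)"
    unfolding Hf_def using assms
    by (auto intro!: derivative_eq_intros simp: power2_eq_square)
  moreover have "((1/(w-k) - 1/(w+k))/k - 2/w^2)/k^2 = 2/((w^2-k^2)*w^2)"
  proof -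
    have "w - k \<noteq> 0" "w + k \<noteq> 0" "w \<noteq> 0" "k \<noteq> 0" using assms by auto
    moreover have "w*w - k*k = (w-k)*(w+k)" by (simp add: algebra_simps)
    ultimately have "w*w - k*k \<noteq> 0" by simp
    with \<open>w \<noteq> 0\<close> \<open>k \<noteq> 0\<close> \<open>w - k \<noteq> 0\<close> \<open>w + k \<noteq> 0\<close> show ?thesis
      by (simp add: field_simps power2_eq_square)
  qed
  ultimately show ?thesis by simp
qed

definition Gf :: "real \<Rightarrow> real \<Rightarrow> real \<Rightarrow> real" where
  "Gf x y t = sqrt ((t+x)*(t+y))"

definition rf :: "real \<Rightarrow> real \<Rightarrow> real \<Rightarrow> real" where
  "rf x y t = (t + (x+y)/2 + Gf x y t)/2"

lemma Gf_pos: "0 \<le> x \<Longrightarrow> 0 \<le> y \<Longrightarrow> 0 < t \<Longrightarrow> 0 < Gf x y t"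
  unfolding Gf_def by simp

lemma Gf_upper:
  assumes "0 \<le> x" "0 \<le> y" "0 \<le> t" shows "Gf x y t \<le> t + (x+y)/2"
  unfolding Gf_def
proof (rule real_le_lsqrt)
  show "0 \<le> t + (x+y)/2" using assms by auto
  have "(t + (x+y)/2)^2 - (t+x)*(t+y) = ((x-y)/2)^2" by (simp add: power2_eq_square field_simps)
  moreover have "0 \<le> ((x-y)/2)^2" by simp
  ultimately show "(t+x)*(t+y) \<le> (t + (x+y)/2)^2" by linarith
qed

lemma sqrt_xy_le: "0 \<le> x \<Longrightarrow> 0 \<le> y \<Longrightarrow> sqrt (x*y) \<le> (x+y)/2"
  using Gf_upper[of x y 0] by (simp add: Gf_def)

lemma Gf_lower:
  assumes xy: "0 \<le> x" "0 \<le> y" "0 \<le> t" shows "t + sqrt (x*y) \<le> Gf x y t"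
  unfolding Gf_def
proof (rule real_le_rsqrt)
  have g: "sqrt (x*y) \<le> (x+y)/2" using sqrt_xy_le xy by simp
  have "(t + sqrt (x*y))^2 = t^2 + 2*t* sqrt (x*y) + x*y"
    using xy by (simp add: power2_eq_square algebra_simps)
  also have "\<dots> \<le> t^2 + t*(x+y) + x*y"
    using g xy mult_left_mono[OF g, of "2*t"] by (simp add: algebra_simps)
  also have "\<dots> = (t+x)*(t+y)" by (simp add: power2_eq_square algebra_simps)
  finally show "(t + sqrt (x*y))^2 \<le> (t+x)*(t+y)" .
qed

lemma Gf_deriv:
  assumes "0 \<le> x" "0 \<le> y" "0 < t"
  shows "(Gf x y has_real_derivative (t + (x+y)/2) / Gf x y t) (at t)"
proof -
  have pos: "0 < (t+x)*(t+y)" using assms by simp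
  have "(Gf x y has_real_derivative inverse (sqrt ((t+x)*(t+y))) / 2 * ((1+0)*(t+y) + (t+x)*(1+0))) (at t)"
    unfolding Gf_def using pos by (auto intro!: derivative_eq_intros)
  moreover have "inverse (sqrt ((t+x)*(t+y))) / 2 * ((1+0)*(t+y) + (t+x)*(1+0)) = (t + (x+y)/2) / Gf x y t"
    unfolding Gf_def by (simp add: field_simps)
  ultimately show ?thesis by (simp only:)
qed

lemma rf_deriv:
  assumes "0 \<le> x" "0 \<le> y" "0 < t"
  shows "(rf x y has_real_derivative rf x y t / Gf x y t) (at t)"
proof -
  have G: "0 < Gf x y t" using Gf_pos assms by simp
  have "(rf x y has_real_derivative (1 + (t + (x+y)/2) / Gf x y t)/2) (at t)"
  proof -
    have "((\<lambda>t. t + (x+y)/2 + Gf x y t) has_real_derivative 1 + 0 + (t + (x+y)/2) / Gf x y t) (at t)"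
      by (intro DERIV_add DERIV_ident DERIV_const Gf_deriv[OF assms])
    then have "((\<lambda>t. (t + (x+y)/2 + Gf x y t)/2) has_real_derivative (1 + 0 + (t + (x+y)/2) / Gf x y t)/2) (at t)"
      by (rule DERIV_cdivide)
    then show ?thesis unfolding rf_def by simp
  qed
  moreover have "(1 + (t + (x+y)/2) / Gf x y t)/2 = rf x y t / Gf x y t"
    unfolding rf_def using G by (simp add: field_simps)
  ultimately show ?thesis by simp
qed

lemma rf_cont: "isCont (rf x y) t"
  unfolding rf_def Gf_def by (intro continuous_intros) auto

lemma rf_ge:
  assumes "0 \<le> x" "0 \<le> y" "0 \<le> t" shows "t + (x + y + 2 * sqrt (x*y))/4 \<le> rf x y t"
  using Gf_lower[OF assms] unfolding rf_def by (simp add: field_simps)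

lemma Gf_cont: "isCont (Gf x y) t"
  unfolding Gf_def by (intro continuous_intros)

lemma pB_integral:
  fixes x y B :: real
  assumes x: "0 \<le> x" and y: "0 \<le> y" and xy: "0 < x + y" and B: "0 < B"
  shows "((\<lambda>t. 1 / (Gf x y t * (rf x y t + B) * sqrt (rf x y t + B))) has_integral
           (0 - Hf (sqrt B) (sqrt ((x + y + 2 * sqrt (x*y))/4 + B)))) {0<..}"
proof (rule ftc_Ioi[where P = "\<lambda>t. Hf (sqrt B) (sqrt (rf x y t + B))"])
  define c where "c = (x + y + 2 * sqrt (x*y))/4"
  have c: "0 < c" unfolding c_def using x y xy by (simp add: add_pos_nonneg)
  have r0: "rf x y 0 = c" unfolding rf_def Gf_def c_def by (simp add: field_simps)
  have rge: "t + c \<le> rf x y t" if "0 \<le> t" for t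
    using rf_ge[OF x y that] unfolding c_def .
  show "((\<lambda>t. Hf (sqrt B) (sqrt (rf x y t + B))) has_real_derivative
          1 / (Gf x y t * (rf x y t + B) * sqrt (rf x y t + B))) (at t)" if t: "0 < t" for t
  proof -
    define r where "r = rf x y t"
    define G where "G = Gf x y t"
    define w where "w = sqrt (r + B)"
    have r: "0 < r" using rge[of t] t c unfolding r_def by simp
    have G: "0 < G" unfolding G_def using Gf_pos x y t by simp
    have w: "0 < w" "w^2 = r + B" unfolding w_def using r B by auto
    have sB: "(sqrt B)^2 = B" "0 < sqrt B" using B by auto
    have wB: "sqrt B < w" unfolding w_def using r B by simp
    have d1: "(Hf (sqrt B) has_real_derivative 2/((w^2 - (sqrt B)^2) * w^2)) (at w)"
      by (rule Hf_deriv[OF sB(2) wB])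
    have d2: "((\<lambda>t. sqrt (rf x y t + B)) has_real_derivative inverse (sqrt (r + B)) / 2 * (r / G + 0)) (at t)"
      unfolding r_def G_def
      by (rule DERIV_chain2[OF DERIV_real_sqrt DERIV_add[OF rf_deriv[OF x y t] DERIV_const]])
         (use r B in \<open>simp add: r_def\<close>)
    have d: "((\<lambda>t. Hf (sqrt B) (sqrt (rf x y t + B))) has_real_derivative
              2/((w^2 - (sqrt B)^2) * w^2) * (inverse (sqrt (r + B)) / 2 * (r / G + 0))) (at t)"
      using DERIV_chain2[OF d1[unfolded w_def r_def] d2] unfolding w_def r_def .
    have "2/((w^2 - (sqrt B)^2) * w^2) * (inverse (sqrt (r + B)) / 2 * (r / G + 0))
          = 1 / (G * (r + B) * w)"
    proof -
      have e1: "w^2 - (sqrt B)^2 = r" "inverse (sqrt (r + B)) = 1/w" using w sB unfolding w_def by (auto simp: inverse_eq_divide)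
      have "r + B \<noteq> 0" "r \<noteq> 0" "G \<noteq> 0" "w \<noteq> 0" using r B G w by auto
      have aux: "\<And>v::real. r \<noteq> 0 \<Longrightarrow> v \<noteq> 0 \<Longrightarrow> G \<noteq> 0 \<Longrightarrow> w \<noteq> 0 \<Longrightarrow>
          2/(r * v) * (1/w/2*(r/G+0)) = 1/(G * v * w)" by (simp add: field_simps)
      show ?thesis unfolding e1 using aux[of "r+B"] r B G w by (simp add: w(2))
    qed
    with d show ?thesis unfolding r_def G_def w_def by simp
  qed
  show "isCont (\<lambda>t. 1 / (Gf x y t * (rf x y t + B) * sqrt (rf x y t + B))) t" if t: "0 < t" for t
  proof -
    have "0 < Gf x y t" using Gf_pos x y t by simp
    moreover have "0 < rf x y t" using rge[of t] t c by simp
    ultimately have "Gf x y t * (rf x y t + B) * sqrt (rf x y t + B) \<noteq> 0" using B by simp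
    then show ?thesis by (intro continuous_intros Gf_cont rf_cont) auto
  qed
  show "0 \<le> 1 / (Gf x y t * (rf x y t + B) * sqrt (rf x y t + B))" if t: "0 < t" for t
  proof -
    have "0 < Gf x y t" using Gf_pos x y t by simp
    moreover have "0 < rf x y t" using rge[of t] t c by simp
    ultimately show ?thesis using B by simp
  qed
  show "((\<lambda>t. Hf (sqrt B) (sqrt (rf x y t + B))) \<longlongrightarrow> Hf (sqrt B) (sqrt ((x + y + 2 * sqrt (x*y))/4 + B))) (at_right 0)"
  proof -
    have sB: "0 < sqrt B" "sqrt B < sqrt (c + B)" using B c by auto
    have "isCont (Hf (sqrt B)) (sqrt (rf x y 0 + B))"
      unfolding r0 by (rule DERIV_isCont[OF Hf_deriv[OF sB]])
    moreover have "isCont (\<lambda>t. sqrt (rf x y t + B)) 0" by (intro continuous_intros rf_cont)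
    ultimately have "isCont (\<lambda>t. Hf (sqrt B) (sqrt (rf x y t + B))) 0"
      using isCont_o2 by blast
    then have "((\<lambda>t. Hf (sqrt B) (sqrt (rf x y t + B))) \<longlongrightarrow> Hf (sqrt B) (sqrt (c + B))) (at 0)"
      unfolding isCont_def r0 .
    then show ?thesis unfolding c_def by (simp add: filterlim_at_split)
  qed
  show "((\<lambda>t. Hf (sqrt B) (sqrt (rf x y t + B))) \<longlongrightarrow> 0) at_top"
  proof (rule filterlim_compose[OF Hf_lim])
    show "0 < sqrt B" using B by simp
    have L: "filterlim (\<lambda>t::real. sqrt t) at_top at_top" by real_asymp
    show "filterlim (\<lambda>t. sqrt (rf x y t + B)) at_top at_top"
    proof (rule filterlim_at_top_mono[OF L])
      show "\<forall>\<^sub>F t in at_top. sqrt t \<le> sqrt (rf x y t + B)"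
      proof (rule eventually_mono[OF eventually_ge_at_top[of 0]])
        fix t :: real assume "0 \<le> t"
        then show "sqrt t \<le> sqrt (rf x y t + B)" using rge[of t] c B by simp
      qed
    qed
  qed
qed

lemma powr_32: "0 < v \<Longrightarrow> v powr (3/2) = v * sqrt v"
proof -
  assume v: "0 < v"
  have "v powr (3/2) = v powr (1 + 1/2)" by simp
  also have "\<dots> = v powr 1 * v powr (1/2)" by (rule powr_add)
  also have "\<dots> = v * sqrt v" using v by (simp add: powr_half_sqrt)
  finally show ?thesis .
qed

lemma powr_m32: "0 < v \<Longrightarrow> v powr (-3/2) = 1 / (v * sqrt v)"
proof -
  assume v: "0 < v"
  have "v powr (-3/2) = v powr (-(3/2))" by simp
  also have "\<dots> = inverse (v powr (3/2))" by (rule powr_minus)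
  also have "\<dots> = 1 / (v * sqrt v)" using powr_32[OF v] by (simp add: inverse_eq_divide)
  finally show ?thesis .
qed

lemma mono_aux:
  fixes G v1 v2 :: real
  assumes "0 < G" "0 < v1" "v1 \<le> v2"
  shows "1 / (G * v2 * sqrt v2) \<le> 1 / (G * v1 * sqrt v1)"
proof (rule frac_le)
  show "0 < G * v1 * sqrt v1" using assms by simp
  show "G * v1 * sqrt v1 \<le> G * v2 * sqrt v2"
    using assms by (intro mult_mono) auto
qed simp_all

lemma f_bounds:
  fixes x y z :: real
  assumes x: "0 \<le> x" and y: "0 \<le> y" and xy: "0 < x + y" and z: "(x+y)/2 < z"
  shows "\<exists>Q. ((\<lambda>t. 1 / sqrt ((t + x) * (t + y)) * (t + z) powr (-3/2)) has_integral Q) {0..}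
          \<and> Q \<le> 0 - Hf (sqrt (z - (x+y)/2)) (sqrt ((x + y + 2 * sqrt (x*y))/4 + (z - (x+y)/2)))
          \<and> 0 - Hf (sqrt (z - (x + y + 2 * sqrt (x*y))/4)) (sqrt ((x + y + 2 * sqrt (x*y))/4 + (z - (x + y + 2 * sqrt (x*y))/4))) \<le> Q"
proof -
  define f where "f = (\<lambda>t. 1 / sqrt ((t + x) * (t + y)) * (t + z) powr (-3/2))"
  define a where "a = (x+y)/2"
  define c where "c = (x + y + 2 * sqrt (x*y))/4"
  have g: "sqrt (x*y) \<le> a" unfolding a_def using sqrt_xy_le x y by simp
  have c: "0 < c" "c \<le> a" unfolding c_def a_def using x y xy g[unfolded a_def] by (auto simp: add_pos_nonneg)
  have za: "0 < z - a" using z unfolding a_def by simp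
  have zc: "0 < z - c" using za c by simp
  define pU where "pU = (\<lambda>t. 1 / (Gf x y t * (rf x y t + (z - a)) * sqrt (rf x y t + (z - a))))"
  define pL where "pL = (\<lambda>t. 1 / (Gf x y t * (rf x y t + (z - c)) * sqrt (rf x y t + (z - c))))"
  have U: "(pU has_integral (0 - Hf (sqrt (z - a)) (sqrt (c + (z - a))))) {0<..}"
    unfolding pU_def c_def using pB_integral[OF x y xy za] .
  have L: "(pL has_integral (0 - Hf (sqrt (z - c)) (sqrt (c + (z - c))))) {0<..}"
    unfolding pL_def c_def using pB_integral[OF x y xy zc[unfolded c_def]] .
  have rge: "t + c \<le> rf x y t" if "0 \<le> t" for t
    using rf_ge[OF x y that] unfolding c_def .
  have rle: "rf x y t \<le> t + a" if "0 \<le> t" for t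
  proof -
    have "Gf x y t \<le> t + (x+y)/2" by (rule Gf_upper[OF x y that])
    then show ?thesis unfolding rf_def a_def by (simp add: field_simps)
  qed
  have feq: "f t = 1 / (Gf x y t * (t + z) * sqrt (t + z))" if "0 < t" for t
  proof -
    have "0 < t + z" using that za c by simp
    then have e: "(t + z) powr (-3/2) = 1 / ((t + z) * sqrt (t + z))" by (rule powr_m32)
    show ?thesis unfolding f_def Gf_def e by simp
  qed
  have le1: "f t \<le> pU t" if t: "0 < t" for t
  proof -
    have "0 < Gf x y t" using Gf_pos x y t by simp
    moreover have "0 < rf x y t + (z - a)" using rge[of t] t c za by simp
    moreover have "rf x y t + (z - a) \<le> t + z" using rle[of t] t by simp
    ultimately show ?thesis unfolding feq[OF t] pU_def by (rule mono_aux)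
  qed
  have le2: "pL t \<le> f t" if t: "0 < t" for t
  proof -
    have "0 < Gf x y t" using Gf_pos x y t by simp
    moreover have "0 < t + z" using t za c by simp
    moreover have "t + z \<le> rf x y t + (z - c)" using rge[of t] t by simp
    ultimately show ?thesis unfolding feq[OF t] pL_def by (rule mono_aux)
  qed
  have cont: "continuous_on {0<..} f"
  proof (rule continuous_at_imp_continuous_on, rule ballI)
    fix t :: real assume "t \<in> {0<..}"
    then have t: "0 < t" by simp
    have "0 < t + x" "0 < t + y" using t x y by auto
    moreover have "0 < t + z" using t za c by simp
    ultimately show "isCont f t" unfolding f_def
      by (intro continuous_intros) simp_all
  qed
  have meas: "f \<in> borel_measurable (lebesgue_on {0<..})"
    by (rule continuous_imp_measurable_on_sets_lebesgue[OF cont]) simp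
  have int: "f integrable_on {0<..}"
  proof (rule measurable_bounded_by_integrable_imp_integrable_real[OF meas])
    show "pU integrable_on {0<..}" using U by blast
    show "\<bar>f t\<bar> \<le> pU t" if "t \<in> {0<..}" for t
    proof -
      have "0 < Gf x y t" using Gf_pos[OF x y] that by simp
      moreover have "0 < rf x y t + (z - c)" using rge[of t] that c zc by simp
      ultimately have "0 \<le> pL t" unfolding pL_def by simp
      then show ?thesis using le1[of t] le2[of t] that by simp
    qed
  qed simp
  then obtain Q where Q: "(f has_integral Q) {0<..}" by blast
  have QU: "Q \<le> 0 - Hf (sqrt (z - a)) (sqrt (c + (z - a)))"
    by (rule has_integral_le[OF Q U]) (use le1 in simp)
  have QL: "0 - Hf (sqrt (z - c)) (sqrt (c + (z - c))) \<le> Q"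
    by (rule has_integral_le[OF L Q]) (use le2 in simp)
  have Q0: "(f has_integral Q) {0..}"
  proof (subst has_integral_spike_set_eq[of "{0..}" "{0<..}"])
    show "negligible {t \<in> {0..} - {0<..}. f t \<noteq> 0}"
      by (rule negligible_subset[of "{0}"]) auto
    show "negligible {t \<in> {0<..} - {0..}. f t \<noteq> 0}" by (rule negligible_subset[of "{}"]) auto
  qed (use Q in simp)
  show ?thesis using Q0 QU QL unfolding f_def a_def c_def by (intro exI[of _ Q] conjI)
qed

lemma Kf_deriv:
  assumes B: "0 < B" and s: "0 < s"
  shows "((\<lambda>s. Hf (sqrt B) (sqrt (s + B))) has_real_derivative 1 / (s * (s + B) * sqrt (s + B))) (at s)"
proof -
  define w where "w = sqrt (s + B)"
  have w: "0 < w" "w^2 = s + B" unfolding w_def using s B by auto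
  have sB: "(sqrt B)^2 = B" "0 < sqrt B" using B by auto
  have wB: "sqrt B < w" unfolding w_def using s B by simp
  have d1: "(Hf (sqrt B) has_real_derivative 2/((w^2 - (sqrt B)^2) * w^2)) (at w)"
    by (rule Hf_deriv[OF sB(2) wB])
  have d2: "((\<lambda>s. sqrt (s + B)) has_real_derivative inverse (sqrt (s + B)) / 2 * (1 + 0)) (at s)"
    by (rule DERIV_chain2[OF DERIV_real_sqrt DERIV_add[OF DERIV_ident DERIV_const]])
       (use s B in simp)
  have d: "((\<lambda>s. Hf (sqrt B) (sqrt (s + B))) has_real_derivative
            2/((w^2 - (sqrt B)^2) * w^2) * (inverse (sqrt (s + B)) / 2 * (1 + 0))) (at s)"
    using DERIV_chain2[OF d1[unfolded w_def] d2] unfolding w_def .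
  have e1: "w^2 - (sqrt B)^2 = s" "inverse (sqrt (s + B)) = 1/w"
    using w sB unfolding w_def by (auto simp: inverse_eq_divide)
  have aux: "\<And>v::real. s \<noteq> 0 \<Longrightarrow> v \<noteq> 0 \<Longrightarrow> w \<noteq> 0 \<Longrightarrow>
      2/(s * v) * (1/w/2*(1+0)) = 1/(s * v * w)" by (simp add: field_simps)
  have "2/((w^2 - (sqrt B)^2) * w^2) * (inverse (sqrt (s + B)) / 2 * (1 + 0)) = 1 / (s * (s + B) * w)"
    unfolding e1 using aux[of "s+B"] s B w by (simp add: w(2))
  with d show ?thesis unfolding w_def by simp
qed

lemma Kf_step:
  assumes B: "0 < B" and c: "0 < c" "c \<le> a"
    and N: "\<And>s. c \<le> s \<Longrightarrow> s \<le> a \<Longrightarrow> 1 / ((s + B) * sqrt (s + B)) \<le> N"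
  shows "Hf (sqrt B) (sqrt (a + B)) - Hf (sqrt B) (sqrt (c + B)) \<le> N * (ln a - ln c)"
proof -
  define F where "F = (\<lambda>s. Hf (sqrt B) (sqrt (s + B)) - N * ln s)"
  have "F a \<le> F c"
  proof (rule DERIV_nonpos_imp_nonincreasing[OF c(2)])
    fix s assume s: "c \<le> s" "s \<le> a"
    have sp: "0 < s" using s c by simp
    have "(F has_real_derivative 1 / (s * (s + B) * sqrt (s + B)) - N * (1/s)) (at s)"
      unfolding F_def by (intro DERIV_diff DERIV_cmult Kf_deriv B sp DERIV_ln_divide sp)
    moreover have "1 / (s * (s + B) * sqrt (s + B)) - N * (1/s) \<le> 0"
    proof -
      have "1 / (s * (s + B) * sqrt (s + B)) = (1 / ((s + B) * sqrt (s + B))) * (1/s)"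
        by simp
      also have "\<dots> \<le> N * (1/s)" using N[OF s] sp by (intro mult_right_mono) auto
      finally show ?thesis by simp
    qed
    ultimately show "\<exists>y. DERIV F s :> y \<and> y \<le> 0" by blast
  qed
  then show ?thesis unfolding F_def by (simp add: algebra_simps)
qed

lemma Hf_J:
  assumes k: "0 < \<kappa>" "\<kappa> < 1" and w: "0 < w"
  shows "w^3 * (- Hf (\<kappa> * w) w) = (ln (1+\<kappa>) - ln (1-\<kappa>))/\<kappa>^3 - 2/\<kappa>^2"
proof -
  have l1: "ln (w - \<kappa> * w) = ln w + ln (1 - \<kappa>)"
  proof -
    have "w - \<kappa> * w = w * (1 - \<kappa>)" by (simp add: algebra_simps)
    then show ?thesis using k w by (simp add: ln_mult)
  qed
  have l2: "ln (w + \<kappa> * w) = ln w + ln (1 + \<kappa>)"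
  proof -
    have "w + \<kappa> * w = w * (1 + \<kappa>)" by (simp add: algebra_simps)
    then show ?thesis using k w by (simp add: ln_mult)
  qed
  have "\<kappa> \<noteq> 0" "w \<noteq> 0" using k w by auto
  then show ?thesis unfolding Hf_def l1 l2 by (simp add: field_simps power2_eq_square power3_eq_cube)
qed

definition Jf :: "real \<Rightarrow> real" where
  "Jf \<kappa> = (ln (1+\<kappa>) - ln (1-\<kappa>))/\<kappa>^3 - 2/\<kappa>^2"


lemma JA:
  assumes "0 < k" "k < 1"
  shows "Jf k > 2 * ln 2 - 2 - ln (1 - k^2) / k^2"
proof -
  have L: "ln (1 - k^2) = ln (1+k) + ln (1-k)"
  proof -
    have "1 - k^2 = (1+k)*(1-k)" by (simp add: power2_eq_square algebra_simps)
    then show ?thesis using assms by (simp add: ln_mult)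
  qed
  have "Jf k - (2 * ln 2 - 2 - ln (1 - k^2) / k^2) = phiA k / k^3"
    using assms unfolding Jf_def phiA_def L by (simp add: field_simps power2_eq_square power3_eq_cube)
  moreover have "phiA k / k^3 > 0" using phiA_pos[OF assms] assms by simp
  ultimately show ?thesis by simp
qed

lemma JB:
  assumes "0 < k" "k < 1"
  shows "Jf k < 2 * ln 2 - 2 - (1 + 3 * (1 - k^2) / (2 * k^2)) * ln (1 - k^2)"
proof -
  have L: "ln (1 - k^2) = ln (1+k) + ln (1-k)"
  proof -
    have "1 - k^2 = (1+k)*(1-k)" by (simp add: power2_eq_square algebra_simps)
    then show ?thesis using assms by (simp add: ln_mult)
  qed
  have "(2 * ln 2 - 2 - (1 + 3 * (1 - k^2) / (2 * k^2)) * ln (1 - k^2)) - Jf k = chiB k / k^3"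
    using assms unfolding Jf_def chiB_def L by (simp add: field_simps power2_eq_square power3_eq_cube)
  moreover have "chiB k / k^3 > 0" using chiB_pos[OF assms] assms by simp
  ultimately show ?thesis by simp
qed


theorem mainTheorem6:
  fixes x y z :: real
  assumes "x \<ge> 0" and "y \<ge> 0" and "x \<noteq> 0 \<or> y \<noteq> 0" and "z > 0"
    and "(x + y) / 2 < z"
  shows "let a = (x + y) / 2; g = sqrt (x * y) in
    \<exists>\<theta>::real. g / (1 - g / z) < \<theta> \<and> \<theta> < 3 * a / (2 * (1 - a / z)) \<and>
      carlson_RD x y z =
        3 / (2 * z powr (3/2)) * (ln (8 * z / (a + g)) - 2 + \<theta> / z * ln (2 * z / (a + g)))"
proof -
  note x = assms(1) and y = assms(2) and z0 = assms(4) and z = assms(5)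
  have xy: "0 < x + y" using assms(1-3) by auto
  define a where "a = (x+y)/2"
  define g where "g = sqrt (x*y)"
  define c where "c = (x + y + 2 * sqrt (x*y))/4"
  have g0: "0 \<le> g" unfolding g_def using x y by simp
  have ga: "g \<le> a" unfolding g_def a_def using sqrt_xy_le x y by simp
  have a0: "0 < a" unfolding a_def using xy by simp
  have ac: "a + g = 2 * c" unfolding a_def g_def c_def by simp
  have c0: "0 < c" "c \<le> a" "a / 2 \<le> c" using ac g0 ga a0 by auto
  have za: "a < z" using z unfolding a_def .
  have zc: "c < z" "g < z" using za c0 ga by auto
  obtain Q where Qint: "((\<lambda>t. 1 / sqrt ((t + x) * (t + y)) * (t + z) powr (-3/2)) has_integral Q) {0..}"
    and QU0: "Q \<le> 0 - Hf (sqrt (z - (x+y)/2)) (sqrt ((x + y + 2 * sqrt (x*y))/4 + (z - (x+y)/2)))"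
    and QL0: "0 - Hf (sqrt (z - (x + y + 2 * sqrt (x*y))/4)) (sqrt ((x + y + 2 * sqrt (x*y))/4 + (z - (x + y + 2 * sqrt (x*y))/4))) \<le> Q"
    using f_bounds[OF x y xy z] by blast
  have QU: "Q \<le> - Hf (sqrt (z - a)) (sqrt (c + (z - a)))" using QU0 unfolding a_def c_def by simp
  have QL: "- Hf (sqrt (z - c)) (sqrt (c + (z - c))) \<le> Q" using QL0 unfolding c_def by simp
  have RD: "carlson_RD x y z = 3/2 * Q"
    unfolding carlson_RD_def using integral_unique[OF Qint] by simp
  define w where "w = sqrt z"
  have w: "0 < w" "w^2 = z" "w * w = z" unfolding w_def using z0 by auto
  have zp: "z powr (3/2) = z * w" unfolding w_def using powr_32[OF z0] .
  have w3: "w^3 = z * w" using w by (simp add: power3_eq_cube)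
  define L where "L = ln z - ln c"
  have L0: "0 < L" unfolding L_def using zc c0 by simp
  have lnL: "ln (2 * z / (a + g)) = L" unfolding L_def ac using z0 c0 by (simp add: ln_div)
  have ln8: "ln (8 * z / (a + g)) = 2 * ln 2 + L"
  proof -
    have "8 * z / (a + g) = 4 * (z / c)" unfolding ac by simp
    moreover have "ln (4 * (z / c)) = ln 4 + ln (z / c)" by (rule ln_mult_pos) (use z0 c0 in auto)
    moreover have "ln (4::real) = 2 * ln 2"
      using ln_realpow[of 2 2] by simp
    ultimately show ?thesis unfolding L_def using z0 c0 by (simp add: ln_div)
  qed
  define kL where "kL = sqrt (z - c) / w"
  have kL: "0 < kL" "kL < 1" "kL * w = sqrt (z - c)" "kL^2 = (z - c) / z"
  proof -
    show "0 < kL" unfolding kL_def using zc w by simp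
    have "sqrt (z - c) < sqrt z" using c0 by simp
    then show "kL < 1" unfolding kL_def w_def using w by (simp add: w_def)
    show "kL * w = sqrt (z - c)" unfolding kL_def using w by simp
    show "kL^2 = (z - c) / z" unfolding kL_def using zc w by (simp add: power_divide)
  qed
  have JL: "z * w * (- Hf (sqrt (z - c)) (sqrt (c + (z - c)))) = Jf kL"
  proof -
    have "sqrt (c + (z - c)) = w" unfolding w_def by simp
    then show ?thesis using Hf_J[OF kL(1,2) w(1)] unfolding Jf_def kL(3) w3 by simp
  qed
  have lowJ: "Jf kL > 2 * ln 2 - 2 + z / (z - c) * L"
  proof -
    have "1 - kL^2 = c / z" unfolding kL(4) using z0 by (simp add: field_simps)
    then have "ln (1 - kL^2) / kL^2 = - (z / (z - c)) * L"
      unfolding L_def kL(4) using z0 c0 zc by (simp add: ln_div field_simps)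
    then show ?thesis using JA[OF kL(1,2)] by simp
  qed
  have lower: "z * w * Q > 2 * ln 2 - 2 + z / (z - c) * L"
  proof -
    have "z * w * (- Hf (sqrt (z - c)) (sqrt (c + (z - c)))) \<le> z * w * Q"
      using QL z0 w by (intro mult_left_mono) auto
    then show ?thesis using JL lowJ by simp
  qed
  define kU where "kU = sqrt (z - a) / w"
  have kU: "0 < kU" "kU < 1" "kU * w = sqrt (z - a)" "kU^2 = (z - a) / z"
  proof -
    show "0 < kU" unfolding kU_def using za w by simp
    have "sqrt (z - a) < sqrt z" using a0 by simp
    then show "kU < 1" unfolding kU_def w_def using w by (simp add: w_def)
    show "kU * w = sqrt (z - a)" unfolding kU_def using w by simp
    show "kU^2 = (z - a) / z" unfolding kU_def using za w by (simp add: power_divide)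
  qed
  define M where "M = 1 + 3 * a / (2 * (z - a))"
  have JU: "z * w * (- Hf (sqrt (z - a)) (sqrt (a + (z - a)))) = Jf kU"
  proof -
    have "sqrt (a + (z - a)) = w" unfolding w_def by simp
    then show ?thesis using Hf_J[OF kU(1,2) w(1)] unfolding Jf_def kU(3) w3 by simp
  qed
  have upJ: "Jf kU < 2 * ln 2 - 2 + M * (ln z - ln a)"
  proof -
    have e1: "1 - kU^2 = a / z" unfolding kU(4) using z0 by (simp add: field_simps)
    have e2: "3 * (1 - kU^2) / (2 * kU^2) = 3 * a / (2 * (z - a))"
      unfolding e1 kU(4) using z0 za by (simp add: field_simps)
    have "(1 + 3 * (1 - kU^2) / (2 * kU^2)) * ln (1 - kU^2) = - (M * (ln z - ln a))"
    proof -
      have l: "ln (1 - kU^2) = ln a - ln z" unfolding e1 using z0 a0 by (simp add: ln_div)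
      show ?thesis unfolding e2 l M_def by (simp only: mult_minus_right[symmetric] minus_diff_eq)
    qed
    then show ?thesis using JB[OF kU(1,2)] by simp
  qed
  have step: "Hf (sqrt (z - a)) (sqrt (a + (z - a))) - Hf (sqrt (z - a)) (sqrt (c + (z - a)))
      \<le> (M / (z * w)) * (ln a - ln c)"
  proof (rule Kf_step)
    show "0 < z - a" using za by simp
    show "0 < c" "c \<le> a" using c0 by auto
    fix s assume s: "c \<le> s" "s \<le> a"
    define v where "v = s + (z - a)"
    have v: "z - a / 2 \<le> v" "0 < v" unfolding v_def using s c0 za by auto
    have poly: "z * (z - a)^2 \<le> (z - a/2)^3"
    proof -
      have "(z - a/2)^3 - z * (z - a)^2 = a / 8 * ((z - a) * (4 * z + 2 * a) + a^2)"
        by (simp add: field_simps power2_eq_square power3_eq_cube)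
      moreover have "0 \<le> a / 8 * ((z - a) * (4 * z + 2 * a) + a^2)"
        using a0 za by (intro mult_nonneg_nonneg add_nonneg_nonneg) auto
      ultimately show ?thesis by simp
    qed
    have "(z - a/2)^3 \<le> v^3" using v za a0 by (intro power_mono) auto
    with poly have "z * (z - a)^2 \<le> v^3" by simp
    then have "sqrt (z * (z - a)^2) \<le> sqrt (v^3)" by (rule real_sqrt_le_mono)
    moreover have "sqrt (z * (z - a)^2) = w * (z - a)" unfolding w_def using za
      by (simp add: real_sqrt_mult)
    moreover have "sqrt (v^3) = v * sqrt v" using v
      by (simp add: power3_eq_cube real_sqrt_mult)
    ultimately have le: "w * (z - a) \<le> v * sqrt v" by simp
    have pos: "0 < w * (z - a)" using w za by simp
    have "1 / (v * sqrt v) \<le> 1 / (w * (z - a))"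
      using le pos by (intro divide_left_mono) auto
    also have "\<dots> \<le> M / (z * w)"
    proof -
      have "1 / (w * (z - a)) = (2 * z) / (2 * (z - a) * z * w)" using z0 w za by (simp add: field_simps)
      also have "\<dots> \<le> (2 * z + a) / (2 * (z - a) * z * w)"
        using a0 z0 w za by (intro divide_right_mono) auto
      also have "\<dots> = M / (z * w)" unfolding M_def using z0 w za by (simp add: field_simps)
      finally show ?thesis .
    qed
    finally show "1 / ((s + (z - a)) * sqrt (s + (z - a))) \<le> M / (z * w)" unfolding v_def .
  qed
  have upper: "z * w * Q < 2 * ln 2 - 2 + M * L"
  proof -
    have "z * w * Q \<le> z * w * (- Hf (sqrt (z - a)) (sqrt (c + (z - a))))"
      using QU z0 w by (intro mult_left_mono) auto
    also have "\<dots> \<le> z * w * (- Hf (sqrt (z - a)) (sqrt (a + (z - a))) + (M / (z * w)) * (ln a - ln c))"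
      using step z0 w by (intro mult_left_mono) auto
    also have "\<dots> = z * w * (- Hf (sqrt (z - a)) (sqrt (a + (z - a)))) + M * (ln a - ln c)"
    proof -
      have gen: "\<And>X Y. z * w * (X + (M / (z * w)) * Y) = z * w * X + M * Y"
        using z0 w by (simp add: field_simps)
      show ?thesis by (rule gen)
    qed
    also have "\<dots> = Jf kU + M * (ln a - ln c)"
      using JU by simp
    also have "\<dots> < 2 * ln 2 - 2 + M * (ln z - ln a) + M * (ln a - ln c)"
      using upJ by simp
    also have "\<dots> = 2 * ln 2 - 2 + M * L" unfolding L_def by (simp add: algebra_simps)
    finally show ?thesis .
  qed
  define D where "D = z * w * Q - ln (8 * z / (a + g)) + 2"
  have Dlow: "g / (z - g) * L < D"
  proof -
    have "g / (z - g) \<le> c / (z - c)"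
      using g0 ga c0 zc ac by (intro frac_le) auto
    then have "g / (z - g) * L \<le> c / (z - c) * L" using L0 by (intro mult_right_mono) auto
    moreover have "c / (z - c) * L = z / (z - c) * L - L" using zc by (simp add: field_simps)
    ultimately show ?thesis using lower unfolding D_def ln8 by simp
  qed
  have Dup: "D < 3 * a / (2 * (z - a)) * L"
    using upper unfolding D_def ln8 M_def by (simp add: algebra_simps)
  define \<theta> where "\<theta> = D * z / L"
  have th1: "g / (1 - g / z) < \<theta>"
  proof -
    have "g / (1 - g / z) = g / (z - g) * L * z / L" using z0 zc L0 by (simp add: field_simps)
    also have "\<dots> < D * z / L" using Dlow z0 L0 by (intro divide_strict_right_mono mult_strict_right_mono) auto
    finally show ?thesis unfolding \<theta>_def .
  qed
  have th2: "\<theta> < 3 * a / (2 * (1 - a / z))"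
  proof -
    have "\<theta> = D * z / L" unfolding \<theta>_def ..
    also have "\<dots> < 3 * a / (2 * (z - a)) * L * z / L" using Dup z0 L0 by (intro divide_strict_right_mono mult_strict_right_mono) auto
    also have "\<dots> = 3 * a / (2 * (1 - a / z))" using z0 za L0 by (simp add: field_simps)
    finally show ?thesis .
  qed
  have th3: "carlson_RD x y z = 3 / (2 * z powr (3/2)) * (ln (8 * z / (a + g)) - 2 + \<theta> / z * ln (2 * z / (a + g)))"
  proof -
    have "\<theta> / z * ln (2 * z / (a + g)) = D" unfolding lnL \<theta>_def using z0 L0 by (simp add: field_simps)
    then have "ln (8 * z / (a + g)) - 2 + \<theta> / z * ln (2 * z / (a + g)) = z * w * Q" unfolding D_def by simp
    then show ?thesis unfolding RD zp using z0 w by (simp add: field_simps)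
  qed
  have "\<exists>\<theta>::real. g / (1 - g / z) < \<theta> \<and> \<theta> < 3 * a / (2 * (1 - a / z)) \<and>
      carlson_RD x y z = 3 / (2 * z powr (3/2)) * (ln (8 * z / (a + g)) - 2 + \<theta> / z * ln (2 * z / (a + g)))"
    using th1 th2 th3 by blast
  then show ?thesis unfolding Let_def a_def g_def .
qed

end
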